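(* $$\sum_{n=1}^\infty \frac{H_n \binom{2n}{n}}{(n+1)^2\, 2^{2n}} = -\frac{\pi^2}{3} - 4(\log 2)^2 + 8\log 2.$$
   Context: $H_n=\sum_{k=1}^n \frac{1}{k}$ denotes the $n$-th harmonic number and $\binom{2n}{n}$ the central binomial coefficient; $\log$ is the natural logarithm. *)

theory Defs
  imports "HOL-Analysis.Analysis"
begin

end

theory Submission
  imports Defs "HOL-Real_Asymp.Real_Asymp"
begin

declare binomial_Suc_Suc[simp del]

definition cc :: "nat \<Rightarrow> real" where "cc n = real (2*n choose n) / 4^n"

lemma choose_rec: "(Suc (Suc (2*n)) choose Suc n) * (Suc n)^2 = (2*n+2)*(2*n+1)*(2*n choose n)"
proof -
  have a: "Suc n * (Suc (Suc (2*n)) choose Suc n) = Suc (Suc (2*n)) * (Suc (2*n) choose n)"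
    using Suc_times_binomial[of n "Suc (2*n)"] by simp
  have b: "Suc n * (Suc (2*n) choose Suc n) = Suc (2*n) * (2*n choose n)"
    using Suc_times_binomial[of n "2*n"] by simp
  have c0: "Suc n * (Suc (2*n) choose Suc n) = Suc n * (Suc (2*n) choose n)"
    using Suc_times_binomial_add[of n n] by (simp only: mult_2)
  have c: "(Suc (2*n) choose Suc n) = (Suc (2*n) choose n)"
    using c0 mult_left_cancel[of "Suc n"] by simp
  have "(Suc (Suc (2*n)) choose Suc n) * (Suc n)^2 = Suc (Suc (2*n)) * (Suc n * (Suc (2*n) choose n))"
    by (simp only: power2_eq_square) (metis a mult.assoc mult.commute mult.left_commute)
  also have "Suc n * (Suc (2*n) choose n) = Suc (2*n) * (2*n choose n)" using b c by simp
  also have "Suc (Suc (2*n)) * (Suc (2*n) * (2*n choose n)) = (2*n+2)*(2*n+1)*(2*n choose n)"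
    by (simp add: algebra_simps)
  finally show ?thesis .
qed

lemma cc_0 [simp]: "cc 0 = 1" by (simp add: cc_def)

lemma cc_Suc: "cc (Suc n) = cc n * (2*real n+1) / (2*real n+2)"
proof -
  have h: "real (Suc (Suc (2*n)) choose Suc n) * (real (Suc n))^2 = real (2*n+2) * real (2*n+1) * real (2*n choose n)"
    by (metis choose_rec of_nat_mult of_nat_power)
  have pos: "(real (Suc n))^2 \<noteq> 0" by simp
  have e0: "real (Suc (Suc (2*n)) choose Suc n) = real (2*n+2) * real (2*n+1) * real (2*n choose n) / (real (Suc n))^2"
    by (simp only: eq_divide_eq pos not_False_eq_True if_True h)
  have e: "real (Suc (Suc (2*n)) choose Suc n) = (2*real n+2)*(2*real n+1)*real (2*n choose n) / (real n + 1)^2"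
    using e0 by (simp add: add_ac)
  have "cc (Suc n) = real (Suc (Suc (2*n)) choose Suc n) / (4 * 4^n)" by (simp add: cc_def)
  also have "\<dots> = cc n * ((2*real n+2)*(2*real n+1) / (4 * (real n + 1)^2))"
    unfolding e cc_def by (simp add: mult_ac)
  also have "(2*real n+2)*(2*real n+1) / (4 * (real n + 1)^2) = (2*real n+1) / (2*real n+2)"
    by (simp add: divide_simps power2_eq_square) (simp add: algebra_simps)
  finally show ?thesis by simp
qed

lemma cc_pos: "cc n > 0" by (simp add: cc_def)

lemma cc_sq_le: "(cc n)^2 \<le> 1 / (2*n+1)"
proof (induction n)
  case 0 then show ?case by simp
next
  case (Suc n)
  have "(cc (Suc n))^2 = (cc n)^2 * ((2*real n+1)/(2*real n+2))^2" by (simp add: cc_Suc power_mult_distrib power_divide)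
  also have "\<dots> \<le> 1/(2*real n+1) * ((2*real n+1)/(2*real n+2))^2" by (rule mult_right_mono[OF Suc.IH]) simp
  also have "\<dots> = (2*real n+1) / (2*real n+2)^2" by (simp add: power2_eq_square)
  also have "\<dots> \<le> 1 / (2 * real (Suc n) + 1)"
  proof -
    have "(2*real n+1) * (2*real n+3) \<le> (2*real n+2)^2" by (simp add: power2_eq_square algebra_simps)
    thus ?thesis by (simp add: divide_simps add_ac)
  qed
  finally show ?case .
qed

lemma cc_le1: "cc n \<le> 1"
proof -
  have "(cc n)^2 \<le> 1" using cc_sq_le[of n] by (rule order_trans) (simp add: field_simps)
  thus ?thesis using cc_pos[of n] by (simp add: power_le_one_iff abs_square_le_1)
qed

lemma cc_gchoose: "cc n = (-1)^n * ((-1/2::real) gchoose n)"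
proof (induction n)
  case 0 then show ?case by simp
next
  case (Suc n)
  have "(real n + 1) * ((-1/2::real) gchoose Suc n) = (-1/2 - real n) * ((-1/2) gchoose n)"
    using gbinomial_mult_1[of "-1/2::real" n] by (simp add: algebra_simps)
  hence e: "((-1/2::real) gchoose Suc n) = - (((-1/2) gchoose n) * (2*real n+1) / (2*real n+2))"
    by (simp add: field_simps)
  show ?case unfolding cc_Suc Suc.IH e by simp
qed

lemma cc_sums: "\<bar>x\<bar> < 1 \<Longrightarrow> (\<lambda>n. cc n * x^n) sums (1 / sqrt (1 - x))"
proof -
  assume x: "\<bar>x\<bar> < 1"
  have s: "(\<lambda>n. ((-1/2::real) gchoose n) * (-x)^n) sums (1 + (-x)) powr (-1/2)"
    by (rule gen_binomial_real) (use x in simp)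
  have eq: "(\<lambda>n. ((-1/2::real) gchoose n) * (-x)^n) = (\<lambda>n. cc n * x^n)"
  proof
    fix n
    show "((-1/2::real) gchoose n) * (-x)^n = cc n * x^n"
      unfolding cc_gchoose power_minus[of x] by (simp only: mult_ac)
  qed
  have pw: "(1 + (-x)) powr (-1/2) = 1 / sqrt (1 - x)"
  proof -
    have "(1 + (-x)) powr (-1/2) = (1-x) powr (-(1/2))" by simp
    also have "\<dots> = 1/((1-x) powr (1/2))" by (rule powr_minus_divide)
    also have "\<dots> = 1/sqrt(1-x)" using x by (simp add: powr_half_sqrt)
    finally show ?thesis .
  qed
  show ?thesis using s unfolding eq pw .
qed


lemma abel_cont:
  fixes a :: "nat \<Rightarrow> real"
  assumes "summable (\<lambda>n. \<bar>a n\<bar>)"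
  shows "continuous_on {-1..1} (\<lambda>x. \<Sum>n. a n * x^n)"
proof (rule uniform_limit_theorem[where F=sequentially])
  show "\<forall>\<^sub>F n in sequentially. continuous_on {-1..1} (\<lambda>x. \<Sum>i<n. a i * x^i)"
    by (intro always_eventually allI continuous_intros)
  show "uniform_limit {-1..1} (\<lambda>n x. \<Sum>i<n. a i * x^i) (\<lambda>x. \<Sum>i. a i * x^i) sequentially"
  proof (rule Weierstrass_m_test[OF _ assms])
    fix n and x :: real assume "x \<in> {-1..1}"
    hence "\<bar>x\<bar>^n \<le> 1" by (intro power_le_one) auto
    hence "\<bar>a n\<bar> * \<bar>x\<bar>^n \<le> \<bar>a n\<bar> * 1" by (intro mult_left_mono) auto
    thus "norm (a n * x^n) \<le> \<bar>a n\<bar>" by (simp add: abs_mult power_abs)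
  qed
  show "\<not> trivial_limit sequentially" by simp
qed

lemma abel_left:
  fixes a :: "nat \<Rightarrow> real"
  assumes "summable (\<lambda>n. \<bar>a n\<bar>)"
  shows "((\<lambda>x. \<Sum>n. a n * x^n) \<longlongrightarrow> (\<Sum>n. a n)) (at_left 1)"
proof -
  have "continuous_on {0..1} (\<lambda>x. \<Sum>n. a n * x^n)"
    by (rule continuous_on_subset[OF abel_cont[OF assms]]) auto
  hence "((\<lambda>x. \<Sum>n. a n * x^n) \<longlongrightarrow> (\<Sum>n. a n * 1^n)) (at 1 within {0..1})"
    unfolding continuous_on_def by (metis atLeastAtMost_iff order_refl zero_le_one)
  thus ?thesis by (simp add: at_within_Icc_at_left)
qed

lemma key_limit:
  fixes a :: "nat \<Rightarrow> real" and f :: "real \<Rightarrow> real"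
  assumes nn: "\<And>n. a n \<ge> 0"
    and ser: "\<And>x. 0 < x \<Longrightarrow> x < 1 \<Longrightarrow> (\<lambda>n. a n * x^n) sums f x"
    and lim: "(f \<longlongrightarrow> l) (at_left 1)"
  shows "a sums l"
proof -
  have ev01: "\<forall>\<^sub>F x in at_left (1::real). 0 < x \<and> x < 1"
    using eventually_at_left_real[of 0 "1::real"] by (auto elim: eventually_mono)
  have bnd: "(\<Sum>i<N. a i) \<le> l" for N
  proof -
    have "((\<lambda>x. \<Sum>i<N. a i * x^i) \<longlongrightarrow> (\<Sum>i<N. a i * 1^i)) (at_left (1::real))"
      by (intro tendsto_intros)
    hence 1: "((\<lambda>x. \<Sum>i<N. a i * x^i) \<longlongrightarrow> (\<Sum>i<N. a i)) (at_left (1::real))" by simp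
    have ev: "\<forall>\<^sub>F x in at_left 1. (\<Sum>i<N. a i * x^i) \<le> f x"
      using ev01
    proof (rule eventually_mono)
      fix x :: real assume x: "0 < x \<and> x < 1"
      have s: "(\<lambda>n. a n * x^n) sums f x" using ser x by auto
      show "(\<Sum>i<N. a i * x^i) \<le> f x"
        unfolding sums_unique[OF s] 
        by (rule sum_le_suminf[OF sums_summable[OF s]]) (use x nn in auto)
    qed
    show ?thesis by (rule tendsto_le[OF trivial_limit_at_left_real lim 1 ev])
  qed
  have summ: "summable a" by (rule summableI_nonneg_bounded[OF nn bnd])
  have abs: "summable (\<lambda>n. \<bar>a n\<bar>)" using summ nn by simp
  have t1: "((\<lambda>x. \<Sum>n. a n * x^n) \<longlongrightarrow> suminf a) (at_left 1)" by (rule abel_left[OF abs])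
  have "\<forall>\<^sub>F x in at_left 1. (\<Sum>n. a n * x^n) = f x"
    using ev01
  proof (rule eventually_mono)
    fix x :: real assume "0 < x \<and> x < 1"
    hence "(\<lambda>n. a n * x^n) sums f x" using ser by auto
    thus "(\<Sum>n. a n * x^n) = f x" by (simp add: sums_iff)
  qed
  hence t2: "(f \<longlongrightarrow> suminf a) (at_left 1)" using t1 Lim_transform_eventually by blast
  have "l = suminf a" by (rule tendsto_unique[OF trivial_limit_at_left_real lim t2])
  thus ?thesis using summ by (simp add: summable_sums)
qed

lemma bdd_powser_summable:
  fixes a :: "nat \<Rightarrow> real"
  assumes "\<And>n. \<bar>a n\<bar> \<le> K" "\<bar>z\<bar> < 1"
  shows "summable (\<lambda>n. a n * z^n)"
proof (rule summable_comparison_test')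
  show "summable (\<lambda>n. K * \<bar>z\<bar>^n)" using assms(2) by (intro summable_mult summable_geometric) simp
  fix n show "norm (a n * z^n) \<le> K * \<bar>z\<bar>^n"
    using assms(1)[of n] by (simp add: abs_mult power_abs mult_right_mono)
qed

lemma bdd_powser_deriv:
  fixes a :: "nat \<Rightarrow> real"
  assumes "\<And>n. \<bar>a n\<bar> \<le> K" "\<bar>z\<bar> < 1"
  shows "((\<lambda>x. \<Sum>n. a n * x^n) has_real_derivative (\<Sum>n. diffs a n * z^n)) (at z)"
  by (rule termdiffs_strong'[where K=1]) (use assms bdd_powser_summable[OF assms(1)] in auto)

lemma bdd_powser_isCont:
  fixes a :: "nat \<Rightarrow> real"
  assumes "\<And>n. \<bar>a n\<bar> \<le> K" "\<bar>z\<bar> < 1"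
  shows "isCont (\<lambda>x. \<Sum>n. a n * x^n) z"
  using bdd_powser_deriv[OF assms] by (rule DERIV_isCont)

lemma eq_on_01:
  fixes f g f' :: "real \<Rightarrow> real"
  assumes df: "\<And>x. 0 < x \<Longrightarrow> x < 1 \<Longrightarrow> (f has_real_derivative f' x) (at x)"
    and dg: "\<And>x. 0 < x \<Longrightarrow> x < 1 \<Longrightarrow> (g has_real_derivative f' x) (at x)"
    and cf: "continuous_on {0..<1} f" and cg: "continuous_on {0..<1} g"
    and e0: "f 0 = g 0"
    and x: "0 \<le> x" "x < 1"
  shows "f x = g x"
proof (cases "x = 0")
  case True then show ?thesis using e0 by simp
next
  case False
  hence x0: "0 < x" using x by simp
  have "(\<lambda>t. f t - g t) x = (\<lambda>t. f t - g t) 0"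
  proof (rule DERIV_isconst2[OF x0])
    show "continuous_on {0..x} (\<lambda>t. f t - g t)"
      by (intro continuous_intros continuous_on_subset[OF cf] continuous_on_subset[OF cg]) (use x in auto)
    fix t assume "0 < t" "t < x"
    thus "((\<lambda>t. f t - g t) has_real_derivative 0) (at t)"
      using DERIV_diff[OF df dg, of t] x by simp
  qed (use x in auto)
  thus ?thesis using e0 by simp
qed

lemma cc_div_bdd: "\<bar>cc n / real n\<bar> \<le> 1"
proof (cases "n = 0")
  case False
  hence "cc n / real n \<le> cc n" using cc_pos[of n] by (simp add: divide_le_eq)
  thus ?thesis using cc_pos[of n] cc_le1[of n] by simp
qed simp

lemma diffs_cc_div: "diffs (\<lambda>n. cc n / real n) = (\<lambda>n. cc (Suc n))"
  by (simp add: diffs_def del: of_nat_Suc)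

lemma sqrt_alg: "0 < (s::real) \<Longrightarrow> s < 1 \<Longrightarrow> (1/s - 1)/(1 - s^2) = 1/(s*(1+s))"
proof -
  assume s: "0 < s" "s < 1"
  have "1 - s^2 = (1-s)*(1+s)" by (simp add: power2_eq_square algebra_simps)
  moreover have "1/s - 1 = (1-s)/s" using s by (simp add: field_simps)
  ultimately have "(1/s - 1)/(1 - s^2) = ((1-s)/s)/((1-s)*(1+s))" by simp
  also have "\<dots> = 1/(s*(1+s))" using s by (simp add: divide_simps)
  finally show ?thesis .
qed

definition F1 :: "real \<Rightarrow> real" where "F1 x = (\<Sum>n. cc n / real n * x^n)"

definition g1 :: "real \<Rightarrow> real" where "g1 x = 2 * ln 2 - 2 * ln (1 + sqrt (1 - x))"

lemma F1_deriv:
  assumes "0 < x" "x < 1"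
  shows "(F1 has_real_derivative 1 / (sqrt (1-x) * (1 + sqrt (1-x)))) (at x)"
proof -
  have "((\<lambda>x. \<Sum>n. (\<lambda>n. cc n / real n) n * x^n) has_real_derivative (\<Sum>n. diffs (\<lambda>n. cc n / real n) n * x^n)) (at x)"
    by (rule bdd_powser_deriv) (use cc_div_bdd assms in auto)
  hence d: "(F1 has_real_derivative (\<Sum>n. cc (Suc n) * x^n)) (at x)"
    unfolding diffs_cc_div F1_def[abs_def] by simp
  have "(\<lambda>n. cc n * x^n) sums (1 / sqrt (1 - x))" using assms by (intro cc_sums) simp
  hence "(\<lambda>n. cc (Suc n) * x^(Suc n)) sums (1 / sqrt (1 - x) - 1)"
    by (subst sums_Suc_iff) simp
  hence "(\<lambda>n. cc (Suc n) * x^(Suc n) / x) sums ((1 / sqrt (1 - x) - 1) / x)"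
    by (rule sums_divide)
  moreover have "(\<lambda>n. cc (Suc n) * x^(Suc n) / x) = (\<lambda>n. cc (Suc n) * x^n)"
    using assms by (simp add: field_simps)
  ultimately have "(\<Sum>n. cc (Suc n) * x^n) = (1 / sqrt (1 - x) - 1) / x" by (simp add: sums_iff)
  also have "\<dots> = (1 / sqrt (1 - x) - 1) / (1 - (sqrt (1-x))^2)" using assms by simp
  also have "\<dots> = 1 / (sqrt (1-x) * (1 + sqrt (1-x)))" using assms by (intro sqrt_alg) auto
  finally show ?thesis using d by simp
qed

lemma g1_deriv:
  assumes "0 < x" "x < 1"
  shows "(g1 has_real_derivative 1 / (sqrt (1-x) * (1 + sqrt (1-x)))) (at x)"
proof -
  define s where "s = sqrt (1-x)"
  have s: "s > 0" using assms by (simp add: s_def)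
  have d0: "((\<lambda>x. 1 - x) has_real_derivative -1) (at x)"
    using DERIV_diff[OF DERIV_const[of 1] DERIV_ident] by simp
  have d1: "(sqrt has_real_derivative inverse (sqrt (1-x)) / 2) (at (1-x))"
    by (rule DERIV_real_sqrt) (use assms in simp)
  have d2: "((\<lambda>x. sqrt (1-x)) has_real_derivative inverse s / 2 * -1) (at x)"
    using DERIV_chain2[OF d1 d0] by (simp add: s_def)
  have d3: "((\<lambda>x. 1 + sqrt (1-x)) has_real_derivative 0 + inverse s / 2 * -1) (at x)"
    by (rule DERIV_add[OF DERIV_const d2])
  have d4: "(ln has_real_derivative inverse (1 + s)) (at (1 + s))"
    by (rule DERIV_ln) (use s in simp)
  have d5: "((\<lambda>x. ln (1 + sqrt (1-x))) has_real_derivative inverse (1 + s) * (0 + inverse s / 2 * -1)) (at x)"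
    using DERIV_chain2[OF d4[unfolded s_def] d3] by (simp add: s_def)
  have d6: "(g1 has_real_derivative 0 - 2 * (inverse (1 + s) * (0 + inverse s / 2 * -1))) (at x)"
    unfolding g1_def by (rule DERIV_diff[OF DERIV_const DERIV_cmult[OF d5]])
  have "0 - 2 * (inverse (1 + s) * (0 + inverse s / 2 * -1)) = 1 / (s * (1 + s))"
    using s by (simp add: divide_simps)
  thus ?thesis using d6 by (simp add: s_def)
qed

lemma F1_cont: "continuous_on {0..<1} F1"
  unfolding F1_def
  by (intro continuous_at_imp_continuous_on ballI bdd_powser_isCont[of "\<lambda>n. cc n / real n" 1])
     (use cc_div_bdd in auto)

lemma g1_cont: "continuous_on {0..<1} g1"
  unfolding g1_def
proof (intro continuous_intros ballI)
  fix x :: real assume "x \<in> {0..<1}"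
  have "sqrt (1 - x) \<ge> 0" using \<open>x \<in> {0..<1}\<close> by simp
  thus "1 + sqrt (1 - x) \<noteq> 0" by linarith
qed

lemma F1_0: "F1 0 = 0"
  unfolding F1_def using powser_zero[of "\<lambda>n. cc n / real n"] by simp

lemma F1_eq: "0 \<le> x \<Longrightarrow> x < 1 \<Longrightarrow> F1 x = g1 x"
  by (rule eq_on_01[OF F1_deriv g1_deriv F1_cont g1_cont])
     (auto simp: F1_0 g1_def)

lemma F1_sums: "(\<lambda>n. cc n / real n) sums (2 * ln 2)"
proof (rule key_limit)
  show "cc n / real n \<ge> 0" for n using cc_pos[of n] by simp
  fix x :: real assume x: "0 < x" "x < 1"
  have "summable (\<lambda>n. cc n / real n * x^n)" using x by (intro bdd_powser_summable[of "\<lambda>n. cc n / real n" 1] cc_div_bdd) auto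
  hence "(\<lambda>n. cc n / real n * x^n) sums F1 x" unfolding F1_def by (rule summable_sums)
  thus "(\<lambda>n. cc n / real n * x^n) sums g1 x" using F1_eq x by simp
next
  have "(g1 \<longlongrightarrow> 2 * ln 2 - 2 * ln (1 + sqrt (1 - 1))) (at_left 1)"
    unfolding g1_def by (intro tendsto_intros) simp_all
  thus "(g1 \<longlongrightarrow> 2 * ln 2) (at_left 1)" by simp
qed

lemma const_01:
  fixes h :: "real \<Rightarrow> real"
  assumes d: "\<And>x. 0 < x \<Longrightarrow> x < 1 \<Longrightarrow> (h has_real_derivative 0) (at x)"
    and z: "0 < z" "z < 1" and w: "0 < w" "w < 1"
  shows "h z = h w"
proof -
  have gen: "h b = h a" if "0 < a" "a < b" "b < 1" for a b
  proof (rule DERIV_isconst2[OF \<open>a < b\<close>])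
    show "continuous_on {a..b} h"
      by (intro continuous_at_imp_continuous_on ballI DERIV_isCont[OF d]) (use that in auto)
    show "\<And>x. a < x \<Longrightarrow> x < b \<Longrightarrow> (h has_real_derivative 0) (at x)" using d that by auto
  qed (use that in auto)
  show ?thesis
  proof (cases z w rule: linorder_cases)
    case less then show ?thesis using gen[of z w] z w by simp
  next
    case greater then show ?thesis using gen[of w z] z w by simp
  qed simp
qed

definition lc :: "nat \<Rightarrow> real" where "lc n = 1 / (real n)^2"
definition L :: "real \<Rightarrow> real" where "L z = (\<Sum>n. lc n * z^n)"

lemma lc_bdd: "\<bar>lc n\<bar> \<le> 1"
proof (cases "n = 0")
  case False
  hence "1 \<le> (real n)^2" by (simp add: one_le_power)
  thus ?thesis by (auto simp: lc_def divide_le_eq_1)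
qed (simp add: lc_def)

lemma lc_nonneg: "lc n \<ge> 0" by (simp add: lc_def)

lemma lc_sums: "lc sums (pi^2/6)"
proof -
  have "(\<lambda>n. lc (Suc n)) sums (pi^2/6)"
    using inverse_squares_sums by (simp add: lc_def add.commute)
  thus ?thesis by (subst (asm) sums_Suc_iff) (simp add: lc_def)
qed

lemma diffs_lc: "diffs lc = (\<lambda>n. 1 / (real n + 1))"
  by (rule ext) (simp add: diffs_def lc_def power2_eq_square)

lemma L_deriv:
  assumes "0 < z" "z < 1"
  shows "(L has_real_derivative - ln (1 - z) / z) (at z)"
proof -
  have "((\<lambda>x. \<Sum>n. lc n * x^n) has_real_derivative (\<Sum>n. diffs lc n * z^n)) (at z)"
    by (rule bdd_powser_deriv) (use lc_bdd assms in auto)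
  hence d: "(L has_real_derivative (\<Sum>n. z^n / (real n + 1))) (at z)"
    unfolding diffs_lc L_def[abs_def] by simp
  have "(\<lambda>n. - ((-(-z))^n) / of_nat n) sums ln (1 + (-z))"
    by (rule ln_series') (use assms in simp)
  hence "(\<lambda>n. - (z^n / of_nat n)) sums ln (1 - z)" by simp
  hence "(\<lambda>n. z^n / of_nat n) sums (- ln (1 - z))" using sums_minus by fastforce
  hence "(\<lambda>n. z^(Suc n) / of_nat (Suc n)) sums (- ln (1 - z))"
    by (subst sums_Suc_iff) simp
  hence "(\<lambda>n. z^(Suc n) / of_nat (Suc n) / z) sums (- ln (1 - z) / z)"
    by (rule sums_divide)
  moreover have "(\<lambda>n. z^(Suc n) / of_nat (Suc n) / z) = (\<lambda>n. z^n / (real n + 1))"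
  proof (rule ext)
    fix n
    have "z^(Suc n) / of_nat (Suc n) / z = (z^(Suc n) / z) / of_nat (Suc n)"
      by (simp only: divide_divide_eq_left mult.commute)
    also have "z^(Suc n) / z = z^n" using assms by simp
    finally show "z^(Suc n) / of_nat (Suc n) / z = z^n / (real n + 1)" by simp
  qed
  ultimately have "(\<Sum>n. z^n / (real n + 1)) = - ln (1 - z) / z" by (simp add: sums_iff)
  thus ?thesis using d by simp
qed

lemma L_cont: "continuous_on {-1..1} L"
proof -
  have "summable (\<lambda>n. \<bar>lc n\<bar>)" using lc_sums lc_nonneg by (simp add: sums_summable)
  thus ?thesis unfolding L_def[abs_def] by (rule abel_cont)
qed

lemma L_1: "L 1 = pi^2/6"
  unfolding L_def using lc_sums by (simp add: sums_iff)

lemma L_0: "L 0 = 0"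
  unfolding L_def using powser_zero[of lc] by (simp add: lc_def)

lemma L_half: "L (1/2) = pi^2/12 - (ln 2)^2 / 2"
proof -
  define h where "h z = L z + L (1 - z) + ln z * ln (1 - z)" for z
  have dh: "(h has_real_derivative 0) (at z)" if z: "0 < z" "z < 1" for z
  proof -
    have d1: "(L has_real_derivative - ln (1 - z) / z) (at z)" by (rule L_deriv[OF z])
    have d2: "(L has_real_derivative - ln (1 - (1 - z)) / (1 - z)) (at (1 - z))"
      by (rule L_deriv) (use z in auto)
    have d0: "((\<lambda>x. 1 - x) has_real_derivative -1) (at z)"
      using DERIV_diff[OF DERIV_const[of 1] DERIV_ident] by simp
    have d3: "((\<lambda>x. L (1 - x)) has_real_derivative (- ln (1 - (1 - z)) / (1 - z)) * -1) (at z)"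
      by (rule DERIV_chain2[OF d2 d0])
    have d4: "(ln has_real_derivative inverse z) (at z)" by (rule DERIV_ln) (use z in auto)
    have d5': "(ln has_real_derivative inverse (1 - z)) (at (1 - z))" by (rule DERIV_ln) (use z in auto)
    have d5: "((\<lambda>x. ln (1 - x)) has_real_derivative inverse (1 - z) * -1) (at z)"
      by (rule DERIV_chain2[OF d5' d0])
    have d6: "((\<lambda>x. ln x * ln (1 - x)) has_real_derivative inverse z * ln (1 - z) + (inverse (1 - z) * -1) * ln z) (at z)"
      by (rule DERIV_mult[OF d4 d5])
    have d7: "(h has_real_derivative (- ln (1 - z) / z + (- ln (1 - (1 - z)) / (1 - z)) * -1 + (inverse z * ln (1 - z) + (inverse (1 - z) * -1) * ln z))) (at z)"
      unfolding h_def[abs_def] by (rule DERIV_add[OF DERIV_add[OF d1 d3] d6])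
    have "- ln (1 - z) / z + (- ln (1 - (1 - z)) / (1 - z)) * -1 + (inverse z * ln (1 - z) + (inverse (1 - z) * -1) * ln z) = 0"
      by (simp add: divide_inverse algebra_simps)
    thus ?thesis using d7 by simp
  qed
  have const: "h z = h (1/2)" if "0 < z" "z < 1" for z
    by (rule const_01[OF dh]) (use that in auto)
  have ev01: "\<forall>\<^sub>F x in at_left (1::real). 0 < x \<and> x < 1"
    using eventually_at_left_real[of 0 "1::real"] by (auto elim: eventually_mono)
  have lim1: "(L \<longlongrightarrow> L 1) (at_left 1)"
  proof -
    have "continuous_on {0..1} L" by (rule continuous_on_subset[OF L_cont]) auto
    hence "(L \<longlongrightarrow> L 1) (at 1 within {0..1})"
      unfolding continuous_on_def by (metis atLeastAtMost_iff order_refl zero_le_one)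
    thus ?thesis by (simp add: at_within_Icc_at_left)
  qed
  have isc0: "isCont L 0" unfolding L_def[abs_def]
    by (rule bdd_powser_isCont) (use lc_bdd in auto)
  have lim2: "((\<lambda>z. L (1 - z)) \<longlongrightarrow> L 0) (at_left 1)"
  proof (rule isCont_tendsto_compose[OF isc0])
    have "((\<lambda>z. 1 - z) \<longlongrightarrow> 1 - 1) (at_left (1::real))"
      by (intro tendsto_intros)
    thus "((\<lambda>z. 1 - z) \<longlongrightarrow> 0) (at_left (1::real))" by simp
  qed
  have lim3: "((\<lambda>z::real. ln z * ln (1 - z)) \<longlongrightarrow> 0) (at_left 1)" by real_asymp
  have "(h \<longlongrightarrow> L 1 + L 0 + 0) (at_left 1)"
    unfolding h_def[abs_def] by (intro tendsto_add lim1 lim2 lim3)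
  hence t1: "(h \<longlongrightarrow> pi^2/6) (at_left 1)" by (simp add: L_1 L_0)
  have "\<forall>\<^sub>F x in at_left 1. h (1/2) = h x"
    using ev01 by (rule eventually_mono) (metis const)
  hence t2: "(h \<longlongrightarrow> h (1/2)) (at_left 1)"
    using tendsto_const[of "h (1/2)" "at_left (1::real)"] Lim_transform_eventually by blast
  have "h (1/2) = pi^2/6" by (rule tendsto_unique[OF trivial_limit_at_left_real t2 t1])
  moreover have "h (1/2) = 2 * L (1/2) + (ln 2)^2"
    by (simp add: h_def ln_div power2_eq_square)
  ultimately show ?thesis by simp
qed

lemma sqrt1m_deriv:
  assumes "0 < x" "x < 1"
  shows "((\<lambda>x. sqrt (1-x)) has_real_derivative - (inverse (sqrt (1-x)) / 2)) (at x)"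
proof -
  have d0: "((\<lambda>x. 1 - x) has_real_derivative -1) (at x)"
    using DERIV_diff[OF DERIV_const[of 1] DERIV_ident] by simp
  have d1: "(sqrt has_real_derivative inverse (sqrt (1-x)) / 2) (at (1-x))"
    by (rule DERIV_real_sqrt) (use assms in simp)
  show ?thesis using DERIV_chain2[OF d1 d0] by simp
qed

definition ac :: "nat \<Rightarrow> real" where "ac n = cc n / (real n)^2"
definition AF :: "real \<Rightarrow> real" where "AF x = (\<Sum>n. ac n * x^n)"
definition gA :: "real \<Rightarrow> real" where
  "gA x = 2 * L ((1 - sqrt (1-x)) / 2) - (ln 2 - ln (1 + sqrt (1-x))) * (ln 2 - ln (1 + sqrt (1-x)))"

lemma ac_bdd: "\<bar>ac n\<bar> \<le> 1"
proof (cases "n = 0")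
  case False
  hence "1 \<le> (real n)^2" by (simp add: one_le_power)
  hence "cc n / (real n)^2 \<le> cc n" using cc_pos[of n] by (simp add: divide_le_eq)
  thus ?thesis using cc_pos[of n] cc_le1[of n] by (simp add: ac_def)
qed (simp add: ac_def)

lemma ac_nonneg: "ac n \<ge> 0" using cc_pos[of n] by (simp add: ac_def)

lemma diffs_ac: "diffs ac = (\<lambda>n. cc (Suc n) / (real n + 1))"
  by (rule ext) (simp add: diffs_def ac_def power2_eq_square)

lemma AF_deriv:
  assumes "0 < x" "x < 1"
  shows "(AF has_real_derivative g1 x / x) (at x)"
proof -
  have "((\<lambda>x. \<Sum>n. ac n * x^n) has_real_derivative (\<Sum>n. diffs ac n * x^n)) (at x)"
    by (rule bdd_powser_deriv) (use ac_bdd assms in auto)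
  hence d: "(AF has_real_derivative (\<Sum>n. cc (Suc n) / (real n + 1) * x^n)) (at x)"
    unfolding diffs_ac AF_def[abs_def] by simp
  have "summable (\<lambda>n. cc n / real n * x^n)" using assms
    by (intro bdd_powser_summable[of "\<lambda>n. cc n / real n" 1]) (use cc_div_bdd in auto)
  hence "(\<lambda>n. cc n / real n * x^n) sums F1 x" unfolding F1_def by (rule summable_sums)
  hence "(\<lambda>n. cc n / real n * x^n) sums g1 x" using F1_eq assms by simp
  hence "(\<lambda>n. cc (Suc n) / real (Suc n) * x^(Suc n)) sums g1 x"
    by (subst sums_Suc_iff) simp
  hence "(\<lambda>n. cc (Suc n) / real (Suc n) * x^(Suc n) / x) sums (g1 x / x)"
    by (rule sums_divide)
  moreover have "(\<lambda>n. cc (Suc n) / real (Suc n) * x^(Suc n) / x) = (\<lambda>n. cc (Suc n) / (real n + 1) * x^n)"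
  proof (rule ext)
    fix n
    have "x^(Suc n) / x = x^n" using assms by simp
    thus "cc (Suc n) / real (Suc n) * x^(Suc n) / x = cc (Suc n) / (real n + 1) * x^n"
      by (metis (no_types, lifting) of_nat_Suc add.commute times_divide_eq_right)
  qed
  ultimately have "(\<Sum>n. cc (Suc n) / (real n + 1) * x^n) = g1 x / x" by (simp add: sums_iff)
  thus ?thesis using d by simp
qed

lemma gA_deriv:
  assumes x: "0 < x" "x < 1"
  shows "(gA has_real_derivative g1 x / x) (at x)"
proof -
  define s where "s = sqrt (1-x)"
  have s: "0 < s" "s < 1" using x by (auto simp: s_def)
  have xs: "x = 1 - s^2" using x by (simp add: s_def)
  have ds: "((\<lambda>x. sqrt (1-x)) has_real_derivative - (inverse s / 2)) (at x)"
    using sqrt1m_deriv[OF x] by (simp add: s_def)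
  have du: "((\<lambda>x. (1 - sqrt (1-x)) / 2) has_real_derivative (0 - - (inverse s / 2)) / 2) (at x)"
    by (rule DERIV_cdivide[OF DERIV_diff[OF DERIV_const ds]])
  have dL: "(L has_real_derivative - ln (1 - (1 - s) / 2) / ((1 - s) / 2)) (at ((1 - s) / 2))"
    by (rule L_deriv) (use s in auto)
  have d1: "((\<lambda>x. L ((1 - sqrt (1-x)) / 2)) has_real_derivative
             (- ln (1 - (1 - s) / 2) / ((1 - s) / 2)) * ((0 - - (inverse s / 2)) / 2)) (at x)"
    using DERIV_chain2[OF dL[unfolded s_def] du] by (simp add: s_def)
  have dln: "(ln has_real_derivative inverse (1 + s)) (at (1 + s))" by (rule DERIV_ln) (use s in simp)
  have dv0: "((\<lambda>x. 1 + sqrt (1-x)) has_real_derivative 0 + - (inverse s / 2)) (at x)"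
    by (rule DERIV_add[OF DERIV_const ds])
  have dv1: "((\<lambda>x. ln (1 + sqrt (1-x))) has_real_derivative inverse (1 + s) * (0 + - (inverse s / 2))) (at x)"
    using DERIV_chain2[OF dln[unfolded s_def] dv0] by (simp add: s_def)
  define v' where "v' = 0 - inverse (1 + s) * (0 + - (inverse s / 2))"
  have dv: "((\<lambda>x. ln 2 - ln (1 + sqrt (1-x))) has_real_derivative v') (at x)"
    unfolding v'_def by (rule DERIV_diff[OF DERIV_const dv1])
  define v where "v = ln 2 - ln (1 + s)"
  have dvv: "((\<lambda>x. (ln 2 - ln (1 + sqrt (1-x))) * (ln 2 - ln (1 + sqrt (1-x)))) has_real_derivative v' * v + v' * v) (at x)"
    using DERIV_mult[OF dv dv] by (simp add: s_def v_def)
  define D where "D = 2 * ((- ln (1 - (1 - s) / 2) / ((1 - s) / 2)) * ((0 - - (inverse s / 2)) / 2)) - (v' * v + v' * v)"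
  have dg: "(gA has_real_derivative D) (at x)"
    unfolding gA_def[abs_def] D_def by (rule DERIV_diff[OF DERIV_cmult[OF d1] dvv])
  have l1: "ln (1 - (1 - s) / 2) = - v"
  proof -
    have eq: "1 - (1 - s) / 2 = (1 + s) / 2" by (simp add: field_simps)
    have "ln (1 - (1 - s) / 2) = ln ((1 + s) / 2)" by (simp only: eq)
    also have "\<dots> = ln (1 + s) - ln 2" using s by (simp add: ln_div)
    finally have "ln (1 - (1 - s) / 2) = ln (1 + s) - ln 2" .
    thus ?thesis by (simp add: v_def)
  qed
  have n: "s \<noteq> 0" "1 - s \<noteq> 0" "1 + s \<noteq> 0" using s by auto
  have ss: "s * s < 1" using mult_strict_mono[of s 1 s 1] s by simp
  have sp: "0 < s * s" using s by simp
  have n2a: "s + s * s \<noteq> 0" "1 - s * s \<noteq> 0" using s ss sp by linarith+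
  have "s * 2 + s * (s * 2) = 2 * (s + s * s)" by (simp add: algebra_simps)
  hence n2b: "s * 2 + s * (s * 2) \<noteq> 0" using n2a by simp
  have pa: "2 * ((- (- v) / ((1 - s) / 2)) * ((0 - - (inverse s / 2)) / 2)) = v / (s * (1 - s))"
    using s by (simp add: divide_simps)
  have pb: "v' * v + v' * v = v / (s * (1 + s))"
    unfolding v'_def using s by (simp add: divide_simps)
  have "D = v / (s * (1 - s)) - v / (s * (1 + s))"
    unfolding D_def l1 pb using pa by simp
  also have "\<dots> = 2 * v / (1 - s^2)"
  proof -
    have e: "1 - s^2 = (1 - s) * (1 + s)" by (simp add: power2_eq_square algebra_simps)
    show ?thesis unfolding e using n n2a n2b by (simp add: field_simps)
  qed
  also have "\<dots> = g1 x / x"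
    using xs s by (simp add: g1_def v_def s_def)
  finally show ?thesis using dg by simp
qed

lemma AF_cont: "continuous_on {0..<1} AF"
  unfolding AF_def
  by (intro continuous_at_imp_continuous_on ballI bdd_powser_isCont[of ac 1])
     (use ac_bdd in auto)

lemma gA_cont: "continuous_on {0..<1} gA"
proof -
  have c1: "continuous_on {0..<1} (\<lambda>x::real. (1 - sqrt (1-x)) / 2)" by (intro continuous_intros) auto
  have im: "(\<lambda>x::real. (1 - sqrt (1-x)) / 2) ` {0..<1} \<subseteq> {-1..1}"
  proof
    fix y assume "y \<in> (\<lambda>x::real. (1 - sqrt (1-x)) / 2) ` {0..<1}"
    then obtain x where x: "x \<in> {0..<1}" "y = (1 - sqrt (1-x)) / 2" by auto
    have q: "0 \<le> sqrt (1-x)" "sqrt (1-x) \<le> 1" using x by auto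
    have y2: "2 * y = 1 - sqrt (1-x)" using x(2) by simp
    have "-1 \<le> y" using y2 q by linarith
    moreover have "y \<le> 1" using y2 q by linarith
    ultimately show "y \<in> {-1..1}" by simp
  qed
  have c2: "continuous_on {0..<1} (\<lambda>x. L ((1 - sqrt (1-x)) / 2))"
    by (rule continuous_on_compose2[OF L_cont c1 im])
  have c3: "continuous_on {0..<1} (\<lambda>x::real. ln (1 + sqrt (1-x)))"
  proof (intro continuous_intros ballI)
    fix x :: real assume "x \<in> {0..<1}"
    have "sqrt (1 - x) \<ge> 0" using \<open>x \<in> {0..<1}\<close> by simp
    thus "1 + sqrt (1 - x) \<noteq> 0" by linarith
  qed
  show ?thesis unfolding gA_def[abs_def]
    by (intro continuous_intros c2 c3)
qed

lemma AF_0: "AF 0 = 0"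
  unfolding AF_def using powser_zero[of ac] by (simp add: ac_def)

lemma AF_eq: "0 \<le> x \<Longrightarrow> x < 1 \<Longrightarrow> AF x = gA x"
  by (rule eq_on_01[OF AF_deriv gA_deriv AF_cont gA_cont])
     (auto simp: AF_0 gA_def L_0)

lemma ac_sums: "ac sums (pi^2/6 - 2 * (ln 2)^2)"
proof (rule key_limit)
  show "ac n \<ge> 0" for n by (rule ac_nonneg)
  fix x :: real assume x: "0 < x" "x < 1"
  have "summable (\<lambda>n. ac n * x^n)" using x by (intro bdd_powser_summable[of ac 1]) (use ac_bdd in auto)
  hence "(\<lambda>n. ac n * x^n) sums AF x" unfolding AF_def by (rule summable_sums)
  thus "(\<lambda>n. ac n * x^n) sums gA x" using AF_eq x by simp
next
  have isc: "isCont L (1/2)" unfolding L_def[abs_def]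
    by (rule bdd_powser_isCont) (use lc_bdd in auto)
  have t0: "((\<lambda>x::real. (1 - sqrt (1-x)) / 2) \<longlongrightarrow> (1 - sqrt (1-1)) / 2) (at_left 1)"
    by (intro tendsto_intros) auto
  have t1: "((\<lambda>x::real. L ((1 - sqrt (1-x)) / 2)) \<longlongrightarrow> L (1/2)) (at_left 1)"
    using isCont_tendsto_compose[OF isc, of "\<lambda>x. (1 - sqrt (1-x)) / 2"] t0 by simp
  have t2: "((\<lambda>x::real. ln 2 - ln (1 + sqrt (1-x))) \<longlongrightarrow> ln 2 - ln (1 + sqrt (1-1))) (at_left 1)"
    by (intro tendsto_intros) simp_all
  have "(gA \<longlongrightarrow> 2 * L (1/2) - (ln 2 - ln (1 + sqrt (1-1))) * (ln 2 - ln (1 + sqrt (1-1)))) (at_left 1)"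
    unfolding gA_def[abs_def] by (intro tendsto_intros t1 t2)
  thus "(gA \<longlongrightarrow> pi^2/6 - 2 * (ln 2)^2) (at_left 1)"
    by (simp add: L_half power2_eq_square algebra_simps)
qed

definition mc :: "nat \<Rightarrow> real" where "mc n = (-1)^(Suc n) / (real n)^2"
definition M :: "real \<Rightarrow> real" where "M y = (\<Sum>n. mc n * y^n)"

lemma abs_mc: "\<bar>mc n\<bar> = lc n" by (simp add: mc_def lc_def)

lemma mc_bdd: "\<bar>mc n\<bar> \<le> 1" using lc_bdd[of n] by (simp add: abs_mc)

lemma diffs_mc: "diffs mc = (\<lambda>n. (-1)^n / (real n + 1))"
  by (rule ext) (simp add: diffs_def mc_def power2_eq_square)

lemma M_deriv:
  assumes "0 < y" "y < 1"
  shows "(M has_real_derivative ln (1 + y) / y) (at y)"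
proof -
  have "((\<lambda>x. \<Sum>n. mc n * x^n) has_real_derivative (\<Sum>n. diffs mc n * y^n)) (at y)"
    by (rule bdd_powser_deriv) (use mc_bdd assms in auto)
  hence d: "(M has_real_derivative (\<Sum>n. (-1)^n / (real n + 1) * y^n)) (at y)"
    unfolding diffs_mc M_def[abs_def] by simp
  have "(\<lambda>n. - ((-y)^n) / of_nat n) sums ln (1 + y)"
    by (rule ln_series') (use assms in simp)
  hence "(\<lambda>n. - ((-y)^(Suc n)) / of_nat (Suc n)) sums ln (1 + y)"
    by (subst sums_Suc_iff) simp
  hence "(\<lambda>n. - ((-y)^(Suc n)) / of_nat (Suc n) / y) sums (ln (1 + y) / y)"
    by (rule sums_divide)
  moreover have "(\<lambda>n. - ((-y)^(Suc n)) / of_nat (Suc n) / y) = (\<lambda>n. (-1)^n / (real n + 1) * y^n)"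
  proof (rule ext)
    fix n
    have e1: "(-y)^(Suc n) = - y * ((-1)^n * y^n)"
      by (simp only: power_Suc power_minus[of y n])
    have "- ((-y)^(Suc n)) / of_nat (Suc n) / y = (y * ((-1)^n * y^n)) / y / (real n + 1)"
      unfolding e1 by simp
    also have "\<dots> = (-1)^n / (real n + 1) * y^n" using assms by simp
    finally show "- ((-y)^(Suc n)) / of_nat (Suc n) / y = (-1)^n / (real n + 1) * y^n" .
  qed
  ultimately have "(\<Sum>n. (-1)^n / (real n + 1) * y^n) = ln (1 + y) / y" by (simp add: sums_iff)
  thus ?thesis using d by simp
qed

lemma M_cont: "continuous_on {-1..1} M"
proof -
  have "summable (\<lambda>n. \<bar>mc n\<bar>)" unfolding abs_mc using lc_sums by (simp add: sums_summable)
  thus ?thesis unfolding M_def[abs_def] by (rule abel_cont)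
qed

lemma M_0: "M 0 = 0"
  unfolding M_def using powser_zero[of mc] by (simp add: mc_def)

lemma M_1: "M 1 = pi^2/12"
proof -
  define ev where "ev n = (if even n then lc n else 0)" for n
  have "(\<lambda>j. lc j / 4) sums (pi^2/6/4)" by (rule sums_divide[OF lc_sums])
  moreover have "(\<lambda>j. ev (2*j)) = (\<lambda>j. lc j / 4)"
    by (rule ext) (simp add: ev_def lc_def power2_eq_square)
  ultimately have "(\<lambda>j. ev (2*j)) sums (pi^2/24)" by simp
  hence evs: "ev sums (pi^2/24)"
  proof (subst (asm) sums_mono_reindex)
    show "strict_mono (\<lambda>j::nat. 2*j)" by (rule strict_monoI) simp
    fix n assume "n \<notin> range (\<lambda>j::nat. 2*j)"
    hence "odd n" by auto
    thus "ev n = 0" by (simp add: ev_def)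
  qed
  have "(\<lambda>n. lc n - 2 * ev n) sums (pi^2/6 - 2 * (pi^2/24))"
    by (intro sums_diff sums_mult lc_sums evs)
  moreover have "(\<lambda>n. lc n - 2 * ev n) = mc"
  proof (rule ext)
    fix n show "lc n - 2 * ev n = mc n"
      by (cases "even n") (simp_all add: ev_def lc_def mc_def)
  qed
  ultimately have "mc sums (pi^2/12)" by simp
  thus ?thesis unfolding M_def by (simp add: sums_iff)
qed

definition T :: "nat \<Rightarrow> real" where "T k = (\<Sum>i. cc (i + k) / real (i + k))"

lemma cdiv_summable: "summable (\<lambda>n. cc n / real n)"
  using F1_sums by (rule sums_summable)

lemma T_summable: "summable (\<lambda>i. cc (i + k) / real (i + k))"
  using cdiv_summable by (subst summable_iff_shift) 

lemma T_0: "T 0 = 2 * ln 2"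
  unfolding T_def using F1_sums by (simp add: sums_iff)

lemma T_Suc: "T (Suc k) = T k - cc k / real k"
proof -
  have "(\<Sum>i. cc (Suc i + k) / real (Suc i + k)) = T k - cc (0 + k) / real (0 + k)"
    unfolding T_def by (rule suminf_split_head[OF T_summable])
  thus ?thesis unfolding T_def by simp
qed

lemma T_nonneg: "T k \<ge> 0"
  unfolding T_def by (rule suminf_nonneg[OF T_summable]) (simp add: cc_pos less_imp_le)

lemma T_le: "T k \<le> T 0"
proof (induction k)
  case (Suc k)
  have "cc k / real k \<ge> 0" using cc_pos[of k] by simp
  thus ?case using Suc by (simp add: T_Suc)
qed simp

lemma T_1: "T 1 = 2 * ln 2" using T_Suc[of 0] T_0 by simp

definition pc :: "nat \<Rightarrow> real" where "pc k = T k / real k"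
definition PS :: "real \<Rightarrow> real" where "PS t = (\<Sum>n. pc n * t^n)"
definition gP :: "real \<Rightarrow> real" where "gP t = 4 * M 1 - 4 * M (sqrt (1 - t))"

lemma pc_nonneg: "pc k \<ge> 0" using T_nonneg[of k] by (simp add: pc_def)

lemma pc_bdd: "\<bar>pc k\<bar> \<le> T 0"
proof (cases "k = 0")
  case False
  have "T k / real k \<le> T k" using False T_nonneg[of k] by (simp add: divide_le_eq mult_le_cancel_left1)
  thus ?thesis using T_le[of k] T_nonneg[of k] by (simp add: pc_def)
qed (simp add: pc_def T_0)

lemma T_bdd: "\<bar>T (Suc k)\<bar> \<le> T 0" using T_le T_nonneg by simp

lemma diffs_pc: "diffs pc = (\<lambda>n. T (Suc n))"
  by (rule ext) (simp add: diffs_def pc_def del: of_nat_Suc)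

lemma PS_deriv:
  assumes t: "0 < t" "t < 1"
  shows "(PS has_real_derivative (2 * ln 2 - g1 t) / (1 - t)) (at t)"
proof -
  have "((\<lambda>x. \<Sum>n. pc n * x^n) has_real_derivative (\<Sum>n. diffs pc n * t^n)) (at t)"
    by (rule bdd_powser_deriv) (use pc_bdd t in auto)
  hence d: "(PS has_real_derivative (\<Sum>n. T (Suc n) * t^n)) (at t)"
    unfolding diffs_pc PS_def[abs_def] by simp
  define P where "P = (\<Sum>n. T (Suc n) * t^n)"
  have sP: "(\<lambda>n. T (Suc n) * t^n) sums P"
    unfolding P_def by (rule summable_sums, rule bdd_powser_summable[of "\<lambda>n. T (Suc n)" "T 0"]) (use T_bdd t in auto)
  have s1: "(\<lambda>n. T (Suc n) * t^n * t) sums (P * t)" by (rule sums_mult2[OF sP])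
  have s2: "(\<lambda>n. T (Suc (Suc n)) * t^(Suc n)) sums (P - T 1)"
    using sP sums_Suc_iff[of "\<lambda>n. T (Suc n) * t^n" "P - T 1"] by simp
  have "summable (\<lambda>n. cc n / real n * t^n)" using t
    by (intro bdd_powser_summable[of "\<lambda>n. cc n / real n" 1]) (use cc_div_bdd in auto)
  hence "(\<lambda>n. cc n / real n * t^n) sums F1 t" unfolding F1_def by (rule summable_sums)
  hence "(\<lambda>n. cc n / real n * t^n) sums g1 t" using F1_eq t by simp
  hence s3: "(\<lambda>n. cc (Suc n) / real (Suc n) * t^(Suc n)) sums g1 t"
    by (subst sums_Suc_iff) simp
  have "(\<lambda>n. T (Suc n) * t^n * t - T (Suc (Suc n)) * t^(Suc n)) sums (P * t - (P - T 1))"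
    by (rule sums_diff[OF s1 s2])
  moreover have "(\<lambda>n. T (Suc n) * t^n * t - T (Suc (Suc n)) * t^(Suc n)) = (\<lambda>n. cc (Suc n) / real (Suc n) * t^(Suc n))"
  proof (rule ext)
    fix n
    show "T (Suc n) * t^n * t - T (Suc (Suc n)) * t^(Suc n) = cc (Suc n) / real (Suc n) * t^(Suc n)"
      by (simp only: T_Suc[of "Suc n"]) (simp add: algebra_simps)
  qed
  ultimately have "P * t - (P - T 1) = g1 t" using s3 sums_unique2 by metis
  hence "P = (2 * ln 2 - g1 t) / (1 - t)" using t T_1 by (simp add: field_simps)
  thus ?thesis using d P_def by simp
qed

lemma gP_deriv:
  assumes t: "0 < t" "t < 1"
  shows "(gP has_real_derivative (2 * ln 2 - g1 t) / (1 - t)) (at t)"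
proof -
  define s where "s = sqrt (1 - t)"
  have s: "0 < s" "s < 1" using t by (auto simp: s_def)
  have ts: "1 - t = s^2" using t by (simp add: s_def)
  have ds: "((\<lambda>x. sqrt (1-x)) has_real_derivative - (inverse s / 2)) (at t)"
    using sqrt1m_deriv[OF t] by (simp add: s_def)
  have dM: "(M has_real_derivative ln (1 + s) / s) (at s)" by (rule M_deriv[OF s])
  have d1: "((\<lambda>x. M (sqrt (1-x))) has_real_derivative ln (1 + s) / s * - (inverse s / 2)) (at t)"
    using DERIV_chain2[OF dM[unfolded s_def] ds] by (simp add: s_def)
  have dg: "(gP has_real_derivative 0 - 4 * (ln (1 + s) / s * - (inverse s / 2))) (at t)"
    unfolding gP_def[abs_def] by (rule DERIV_diff[OF DERIV_const DERIV_cmult[OF d1]])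
  have "0 - 4 * (ln (1 + s) / s * - (inverse s / 2)) = 2 * ln (1 + s) / s^2"
    using s by (simp add: divide_simps power2_eq_square)
  also have "\<dots> = (2 * ln 2 - g1 t) / (1 - t)"
    unfolding ts by (simp add: g1_def s_def)
  finally show ?thesis using dg by simp
qed

lemma PS_cont: "continuous_on {0..<1} PS"
  unfolding PS_def
  by (intro continuous_at_imp_continuous_on ballI bdd_powser_isCont[of pc "T 0"])
     (use pc_bdd in auto)

lemma gP_cont: "continuous_on {0..<1} gP"
proof -
  have c1: "continuous_on {0..<1} (\<lambda>x::real. sqrt (1-x))" by (intro continuous_intros)
  have im: "(\<lambda>x::real. sqrt (1-x)) ` {0..<1} \<subseteq> {-1..1}"
  proof
    fix y assume "y \<in> (\<lambda>x::real. sqrt (1-x)) ` {0..<1}"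
    then obtain x where x: "x \<in> {0..<1}" "y = sqrt (1-x)" by auto
    have q: "0 \<le> sqrt (1-x)" "sqrt (1-x) \<le> 1" using x by auto
    have "-1 \<le> y" using q x(2) by linarith
    moreover have "y \<le> 1" using q x(2) by linarith
    ultimately show "y \<in> {-1..1}" by simp
  qed
  have c2: "continuous_on {0..<1} (\<lambda>x. M (sqrt (1-x)))"
    by (rule continuous_on_compose2[OF M_cont c1 im])
  show ?thesis unfolding gP_def[abs_def] by (intro continuous_intros c2)
qed

lemma PS_0: "PS 0 = 0"
  unfolding PS_def using powser_zero[of pc] by (simp add: pc_def)

lemma PS_eq: "0 \<le> x \<Longrightarrow> x < 1 \<Longrightarrow> PS x = gP x"
  by (rule eq_on_01[OF PS_deriv gP_deriv PS_cont gP_cont])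
     (auto simp: PS_0 gP_def)

lemma pc_sums: "pc sums (pi^2/3)"
proof (rule key_limit)
  show "pc n \<ge> 0" for n by (rule pc_nonneg)
  fix x :: real assume x: "0 < x" "x < 1"
  have "summable (\<lambda>n. pc n * x^n)" using x by (intro bdd_powser_summable[of pc "T 0"]) (use pc_bdd in auto)
  hence "(\<lambda>n. pc n * x^n) sums PS x" unfolding PS_def by (rule summable_sums)
  thus "(\<lambda>n. pc n * x^n) sums gP x" using PS_eq x by simp
next
  have isc: "isCont M 0" unfolding M_def[abs_def]
    by (rule bdd_powser_isCont) (use mc_bdd in auto)
  have t0: "((\<lambda>x::real. sqrt (1-x)) \<longlongrightarrow> sqrt (1-1)) (at_left 1)"
    by (intro tendsto_intros)
  have t1: "((\<lambda>x::real. M (sqrt (1-x))) \<longlongrightarrow> M 0) (at_left 1)"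
    using isCont_tendsto_compose[OF isc, of "\<lambda>x. sqrt (1-x)"] t0 by simp
  have "(gP \<longlongrightarrow> 4 * M 1 - 4 * M 0) (at_left 1)"
    unfolding gP_def[abs_def] by (intro tendsto_intros t1)
  thus "(gP \<longlongrightarrow> pi^2/3) (at_left 1)" by (simp add: M_1 M_0)
qed

lemma harm_le_ln: "(harm n :: real) \<le> ln (real n) + 1"
proof (cases "n = 0")
  case True then show ?thesis by (simp add: harm_altdef)
next
  case False
  hence "harm n - ln (of_nat n) \<le> harm 1 - ln (of_nat 1 :: real)"
    by (intro euler_mascheroni_sequence_decreasing) auto
  thus ?thesis by (simp add: harm_altdef)
qed

lemma cc_le_sqrt: "cc n \<le> 1 / sqrt (2 * real n + 1)"
proof -
  have "cc n = sqrt ((cc n)^2)" using cc_pos[of n] by simp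
  also have "\<dots> \<le> sqrt (1 / (2 * real n + 1))" by (rule real_sqrt_le_mono[OF cc_sq_le])
  also have "\<dots> = 1 / sqrt (2 * real n + 1)" by (simp add: real_sqrt_divide)
  finally show ?thesis .
qed

lemma cc_lim: "cc \<longlonglongrightarrow> 0"
proof (rule tendsto_sandwich[of "\<lambda>n. 0" _ _ "\<lambda>n. 1 / sqrt (2 * real n + 1)"])
  show "\<forall>\<^sub>F n in sequentially. 0 \<le> cc n" using cc_pos by (simp add: less_imp_le)
  show "\<forall>\<^sub>F n in sequentially. cc n \<le> 1 / sqrt (2 * real n + 1)" using cc_le_sqrt by simp
  show "(\<lambda>n. 1 / sqrt (2 * real n + 1)) \<longlonglongrightarrow> 0" by real_asymp
qed simp

lemma hc_lim: "(\<lambda>n. harm n * cc n) \<longlonglongrightarrow> 0"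
proof (rule tendsto_sandwich[of "\<lambda>n. 0" _ _ "\<lambda>n. (ln (real n) + 1) * (1 / sqrt (2 * real n + 1))"])
  have "0 \<le> harm n * cc n" for n by (intro mult_nonneg_nonneg harm_nonneg less_imp_le[OF cc_pos])
  thus "\<forall>\<^sub>F n in sequentially. 0 \<le> harm n * cc n" by simp
  have "harm n * cc n \<le> (ln (real n) + 1) * (1 / sqrt (2 * real n + 1))" for n
  proof (rule mult_mono)
    show "harm n \<le> ln (real n) + 1" by (rule harm_le_ln)
    show "cc n \<le> 1 / sqrt (2 * real n + 1)" by (rule cc_le_sqrt)
    show "0 \<le> ln (real n) + 1" by (rule order_trans[OF harm_nonneg harm_le_ln])
    show "0 \<le> cc n" using cc_pos[of n] by simp
  qed
  thus "\<forall>\<^sub>F n in sequentially. harm n * cc n \<le> (ln (real n) + 1) * (1 / sqrt (2 * real n + 1))" by simp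
  show "(\<lambda>n. (ln (real n) + 1) * (1 / sqrt (2 * real n + 1))) \<longlonglongrightarrow> 0" by real_asymp
qed simp

lemma cc_dec: "cc (Suc m) \<le> cc m"
proof -
  have "(2 * real m + 1) / (2 * real m + 2) \<le> 1" by simp
  hence "cc m * ((2 * real m + 1) / (2 * real m + 2)) \<le> cc m * 1"
    using cc_pos[of m] by (intro mult_left_mono) auto
  thus ?thesis by (simp add: cc_Suc)
qed

lemma key_tel: "cc (Suc m) / real (Suc m) \<le> 2 * (cc m - cc (Suc m))"
proof -
  have e: "2 * (cc m - cc (Suc m)) = cc m / (real m + 1)"
    by (simp add: cc_Suc field_simps)
  have "cc (Suc m) / real (Suc m) \<le> cc m / real (Suc m)"
    by (rule divide_right_mono[OF cc_dec]) simp
  thus ?thesis using e by (simp add: add.commute)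
qed

lemma T_tail: "T (Suc N) \<le> 2 * cc N"
proof -
  have l: "(\<lambda>i. cc (i + N)) \<longlonglongrightarrow> 0" by (rule LIMSEQ_ignore_initial_segment[OF cc_lim])
  have "(\<lambda>i. cc (i + N) - cc (Suc i + N)) sums (cc (0 + N) - 0)"
    using telescope_sums'[OF l] by simp
  hence s: "(\<lambda>i. 2 * (cc (i + N) - cc (Suc (i + N)))) sums (2 * cc N)"
    using sums_mult[of _ _ 2] by fastforce
  have "T (Suc N) = (\<Sum>i. cc (Suc (i + N)) / real (Suc (i + N)))" unfolding T_def by simp
  also have "\<dots> \<le> (\<Sum>i. 2 * (cc (i + N) - cc (Suc (i + N))))"
  proof (rule suminf_le)
    show "\<And>i. cc (Suc (i + N)) / real (Suc (i + N)) \<le> 2 * (cc (i + N) - cc (Suc (i + N)))"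
      by (rule key_tel)
    show "summable (\<lambda>i. cc (Suc (i + N)) / real (Suc (i + N)))"
      using T_summable[of "Suc N"] by simp
    show "summable (\<lambda>i. 2 * (cc (i + N) - cc (Suc (i + N))))" using s by (rule sums_summable)
  qed
  also have "\<dots> = 2 * cc N" using s by (simp add: sums_iff)
  finally show ?thesis .
qed

lemma bc_partial: "(\<Sum>n<Suc N. cc n / real n * harm n) = (\<Sum>k<Suc N. pc k) - harm N * T (Suc N)"
proof (induction N)
  case 0 then show ?case by (simp add: pc_def harm_altdef)
next
  case (Suc N)
  have "(\<Sum>n<Suc (Suc N). cc n / real n * harm n) = (\<Sum>k<Suc N. pc k) - harm N * T (Suc N) + cc (Suc N) / real (Suc N) * harm (Suc N)"
    using Suc.IH by simp
  also have "\<dots> = (\<Sum>k<Suc (Suc N). pc k) - harm (Suc N) * T (Suc (Suc N))"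
    by (simp add: T_Suc[of "Suc N"] harm_Suc pc_def divide_inverse algebra_simps)
  finally show ?case .
qed

lemma LIM_Suc_sum: "f sums s \<Longrightarrow> (\<lambda>N. \<Sum>n<Suc N. f n) \<longlonglongrightarrow> s"
  unfolding sums_def by (rule LIMSEQ_Suc)

lemma sums_from_Suc: "(\<lambda>N. \<Sum>n<Suc N. f n) \<longlonglongrightarrow> s \<Longrightarrow> f sums s"
  unfolding sums_def by (subst filterlim_sequentially_Suc[symmetric])

lemma bc_sums: "(\<lambda>n. cc n / real n * harm n) sums (pi^2/3)"
proof (rule sums_from_Suc)
  have t1: "(\<lambda>N. \<Sum>k<Suc N. pc k) \<longlonglongrightarrow> pi^2/3" by (rule LIM_Suc_sum[OF pc_sums])
  have t2: "(\<lambda>N. harm N * T (Suc N)) \<longlonglongrightarrow> 0"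
  proof (rule tendsto_sandwich[of "\<lambda>n. 0" _ _ "\<lambda>N. 2 * (harm N * cc N)"])
    have "0 \<le> harm N * T (Suc N)" for N by (intro mult_nonneg_nonneg harm_nonneg T_nonneg)
    thus "\<forall>\<^sub>F N in sequentially. 0 \<le> harm N * T (Suc N)" by simp
    have "harm N * T (Suc N) \<le> 2 * (harm N * cc N)" for N
      using mult_left_mono[OF T_tail harm_nonneg, of N N] by (simp add: algebra_simps)
    thus "\<forall>\<^sub>F N in sequentially. harm N * T (Suc N) \<le> 2 * (harm N * cc N)" by simp
    show "(\<lambda>N. 2 * (harm N * cc N)) \<longlonglongrightarrow> 0" using tendsto_mult_right_zero[OF hc_lim] by simp
  qed simp
  have "(\<lambda>N. (\<Sum>k<Suc N. pc k) - harm N * T (Suc N)) \<longlonglongrightarrow> pi^2/3 - 0"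
    by (rule tendsto_diff[OF t1 t2])
  thus "(\<lambda>N. \<Sum>n<Suc N. cc n / real n * harm n) \<longlonglongrightarrow> pi^2/3"
    unfolding bc_partial by simp
qed

lemma alg_step: "0 < (m::real) \<Longrightarrow> (H + 1/m)*c/(m+1)^2 = 2*(c/m^2) - 2*(c/m*(H+1/m)) + 4*(c/m) - 4*((H+1/m)*(c*(2*m+1)/(2*m+2))) - ((H+1/m)*(c*(2*m+1)/(2*m+2)))*(2/(m+1)) + 4*(H*c) + (H*c)*(2/m)"
  by (simp add: divide_simps) (simp add: algebra_simps power2_eq_square)

definition sc :: "nat \<Rightarrow> real" where "sc n = harm n * cc n / (real n + 1)^2"
definition wc :: "nat \<Rightarrow> real" where "wc n = 2 * ac n - 2 * (cc n / real n * harm n) + 4 * (cc n / real n)"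

lemma S_step: "sc (Suc N) = wc (Suc N) - 4 * (harm (Suc N) * cc (Suc (Suc N))) - (harm (Suc N) * cc (Suc (Suc N))) * (2 / (real (Suc N) + 1))
   + 4 * (harm N * cc (Suc N)) + (harm N * cc (Suc N)) * (2 / (real N + 1))"
proof -
  define m where "m = real N + 1"
  have m: "0 < m" by (simp add: m_def)
  have e1: "real (Suc N) = m" by (simp add: m_def)
  have e2: "harm (Suc N) = harm N + 1 / m" by (simp add: harm_Suc m_def inverse_eq_divide)
  have e3: "cc (Suc (Suc N)) = cc (Suc N) * (2*m+1)/(2*m+2)" by (simp add: cc_Suc m_def)
  have e4: "ac (Suc N) = cc (Suc N) / m^2" by (simp add: ac_def m_def)
  have "sc (Suc N) = (harm N + 1/m) * cc (Suc N) / (m+1)^2" unfolding sc_def e1 e2 ..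
  also have "\<dots> = 2*(cc (Suc N)/m^2) - 2*(cc (Suc N)/m*(harm N+1/m)) + 4*(cc (Suc N)/m) - 4*((harm N+1/m)*(cc (Suc N)*(2*m+1)/(2*m+2))) - ((harm N+1/m)*(cc (Suc N)*(2*m+1)/(2*m+2)))*(2/(m+1)) + 4*(harm N*cc (Suc N)) + (harm N*cc (Suc N))*(2/m)"
    by (rule alg_step[OF m])
  also have "\<dots> = wc (Suc N) - 4 * (harm (Suc N) * cc (Suc (Suc N))) - (harm (Suc N) * cc (Suc (Suc N))) * (2 / (real (Suc N) + 1))
   + 4 * (harm N * cc (Suc N)) + (harm N * cc (Suc N)) * (2 / (real N + 1))"
    unfolding wc_def e1 e2 e3 e4 m_def[symmetric] by simp
  finally show ?thesis .
qed

lemma S_partial: "(\<Sum>n<Suc N. sc n) = (\<Sum>n<Suc N. wc n) - 4 * (harm N * cc (Suc N)) - (harm N * cc (Suc N)) * (2 / (real N + 1))"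
proof (induction N)
  case 0 then show ?case by (simp add: sc_def wc_def ac_def harm_altdef)
next
  case (Suc N)
  have "(\<Sum>n<Suc (Suc N). sc n) = (\<Sum>n<Suc N. sc n) + sc (Suc N)" by (simp only: sum.lessThan_Suc)
  also have "\<dots> = (\<Sum>n<Suc N. wc n) - 4 * (harm N * cc (Suc N)) - (harm N * cc (Suc N)) * (2 / (real N + 1)) + sc (Suc N)"
    by (simp only: Suc.IH)
  also have "\<dots> = (\<Sum>n<Suc N. wc n) + wc (Suc N) - 4 * (harm (Suc N) * cc (Suc (Suc N))) - (harm (Suc N) * cc (Suc (Suc N))) * (2 / (real (Suc N) + 1))"
    using S_step[of N] by linarith
  also have "(\<Sum>n<Suc N. wc n) + wc (Suc N) = (\<Sum>n<Suc (Suc N). wc n)" by (simp only: sum.lessThan_Suc)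
  finally show ?case .
qed

lemma hc2_lim: "(\<lambda>N. harm N * cc (Suc N)) \<longlonglongrightarrow> 0"
proof (rule tendsto_sandwich[of "\<lambda>n. 0" _ _ "\<lambda>N. harm N * cc N"])
  have "0 \<le> harm n * cc (Suc n)" for n by (intro mult_nonneg_nonneg harm_nonneg less_imp_le[OF cc_pos])
  thus "\<forall>\<^sub>F n in sequentially. 0 \<le> harm n * cc (Suc n)" by simp
  have "harm n * cc (Suc n) \<le> harm n * cc n" for n by (intro mult_left_mono cc_dec harm_nonneg)
  thus "\<forall>\<^sub>F n in sequentially. harm n * cc (Suc n) \<le> harm n * cc n" by simp
qed (simp_all add: hc_lim)

lemma sc_sums: "sc sums (- (pi^2 / 3) - 4 * (ln 2)^2 + 8 * ln 2)"
proof (rule sums_from_Suc)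
  have ws: "wc sums (2 * (pi^2/6 - 2 * (ln 2)^2) - 2 * (pi^2/3) + 4 * (2 * ln 2))"
    unfolding wc_def[abs_def] by (intro sums_add sums_diff sums_mult ac_sums bc_sums F1_sums)
  have t1: "(\<lambda>N. \<Sum>n<Suc N. wc n) \<longlonglongrightarrow> (2 * (pi^2/6 - 2 * (ln 2)^2) - 2 * (pi^2/3) + 4 * (2 * ln 2))"
    by (rule LIM_Suc_sum[OF ws])
  have t2: "(\<lambda>N. 4 * (harm N * cc (Suc N))) \<longlonglongrightarrow> 4 * 0" by (intro tendsto_intros hc2_lim)
  have t3': "(\<lambda>N. 2 / (real N + 1)) \<longlonglongrightarrow> 0" by real_asymp
  have t3: "(\<lambda>N. (harm N * cc (Suc N)) * (2 / (real N + 1))) \<longlonglongrightarrow> 0 * 0"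
    by (rule tendsto_mult[OF hc2_lim t3'])
  have "(\<lambda>N. (\<Sum>n<Suc N. wc n) - 4 * (harm N * cc (Suc N)) - (harm N * cc (Suc N)) * (2 / (real N + 1)))
        \<longlonglongrightarrow> (2 * (pi^2/6 - 2 * (ln 2)^2) - 2 * (pi^2/3) + 4 * (2 * ln 2)) - 4 * 0 - 0 * 0"
    by (intro tendsto_diff t1 t2 t3)
  moreover have "(2 * (pi^2/6 - 2 * (ln 2)^2) - 2 * (pi^2/3) + 4 * (2 * ln 2)) - 4 * 0 - 0 * 0
      = - (pi^2 / 3) - 4 * (ln 2)^2 + 8 * ln 2" by (simp add: algebra_simps)
  ultimately show "(\<lambda>N. \<Sum>n<Suc N. sc n) \<longlonglongrightarrow> - (pi^2 / 3) - 4 * (ln 2)^2 + 8 * ln 2"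
    unfolding S_partial by simp
qed

theorem mainTheorem4:
  shows "(\<lambda>m. let n = Suc m in
            (harm n :: real) * real (2 * n choose n) / ((real n + 1)^2 * 2 ^ (2 * n)))
         sums (- (pi^2 / 3) - 4 * (ln 2)^2 + 8 * ln 2)"
proof -
  have eq: "(\<lambda>m. let n = Suc m in
            (harm n :: real) * real (2 * n choose n) / ((real n + 1)^2 * 2 ^ (2 * n))) = (\<lambda>m. sc (Suc m))"
  proof (rule ext)
    fix m
    have p: "(2::real) ^ (2 * Suc m) = 4 ^ Suc m" by (simp add: power_mult)
    show "(let n = Suc m in (harm n :: real) * real (2 * n choose n) / ((real n + 1)^2 * 2 ^ (2 * n))) = sc (Suc m)"
      unfolding Let_def p sc_def cc_def by simp
  qed
  have "sc 0 = 0" by (simp add: sc_def harm_altdef)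
  hence "(\<lambda>m. sc (Suc m)) sums (- (pi^2 / 3) - 4 * (ln 2)^2 + 8 * ln 2)"
    using sc_sums sums_Suc_iff[of sc] by simp
  thus ?thesis unfolding eq .
qed
end
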